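(* Let $\mu$ be a Radon measure on $\mathbb{R}^n$ and $\delta\in\Upsilon(\mathbb{R}^n,\mu)$. If $\bar\delta x_j=0$ ($\mu$-a.e.) for each $j=1,\dots,n$, then $\delta=0$.
   Context: For a metric space $X$ with Borel measure $\mu$, $\mathrm{Lip}_b(X)$ is the space of bounded Lipschitz functions with norm $\max(\sup|f|,L(f))$; a derivation is a linear map $\delta:\mathrm{Lip}_b(X)\to L^\infty(X,\mu)$ with $\delta(fg)=f\delta g+g\delta f$ and such that whenever a net $(f_\alpha)$ with $\sup\|f_\alpha\|_{\mathrm{Lip}}<\infty$ converges pointwise to $f$, $\delta f_\alpha\to\delta f$ weak-* in $L^\infty(X,\mu)$; $\Upsilon(X,\mu)$ is the set of derivations. For a Lipschitz (possibly unbounded) $f$ on $\mathbb{R}^n$, $\bar\delta f$ is the function with $\chi_B\bar\delta f=\chi_B\,\delta(\tilde f_B)$ for every ball $B$, where $\tilde f_B$ is any bounded Lipschitz function agreeing with $f$ on $B$ (independent of the choice by locality). $x_j$ is the $j$-th coordinate function. *)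

theory Defs
  imports "HOL-Analysis.Analysis"
begin

text \<open>Radon measure on R^n: a Borel measure that is finite on compact sets
(on R^n, locally finite Borel measures are exactly the Radon measures).\<close>
definition radon_measure :: "(real^'n) measure \<Rightarrow> bool" where
  "radon_measure M \<longleftrightarrow> sets M = sets borel \<and> (\<forall>K. compact K \<longrightarrow> emeasure M K < \<infinity>)"

definition Lipb :: "(real^'n \<Rightarrow> real) set" where
  "Lipb = {f. bounded (range f) \<and> (\<exists>C. C-lipschitz_on UNIV f)}"

definition lip_const :: "(real^'n \<Rightarrow> real) \<Rightarrow> real" where
  "lip_const f = Inf {C. C-lipschitz_on UNIV f}"

definition lip_norm :: "(real^'n \<Rightarrow> real) \<Rightarrow> real" where
  "lip_norm f = max (SUP x. \<bar>f x\<bar>) (lip_const f)"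

text \<open>A derivation: elements of L^infinity are represented by measurable, essentially
bounded functions; identities in L^infinity hold almost everywhere. Nets are represented
by filters (on the function space); weak-* convergence in L^infinity = L^1 dual is
convergence of the pairings with every integrable function.\<close>
definition derivation :: "(real^'n) measure \<Rightarrow> ((real^'n \<Rightarrow> real) \<Rightarrow> (real^'n \<Rightarrow> real)) \<Rightarrow> bool" where
  "derivation M \<delta> \<longleftrightarrow>
     (\<forall>f\<in>Lipb. \<delta> f \<in> borel_measurable M \<and> (\<exists>B. AE x in M. \<bar>\<delta> f x\<bar> \<le> B)) \<and>
     (\<forall>f\<in>Lipb. \<forall>g\<in>Lipb. \<forall>a b. AE x in M. \<delta> (\<lambda>y. a * f y + b * g y) x = a * \<delta> f x + b * \<delta> g x) \<and>
     (\<forall>f\<in>Lipb. \<forall>g\<in>Lipb. AE x in M. \<delta> (\<lambda>y. f y * g y) x = f x * \<delta> g x + g x * \<delta> f x) \<and>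
     (\<forall>F C f. (\<forall>\<^sub>F g in F. g \<in> Lipb \<and> lip_norm g \<le> C) \<longrightarrow>
        (\<forall>x. ((\<lambda>g. g x) \<longlongrightarrow> f x) F) \<longrightarrow>
        (\<forall>h. integrable M h \<longrightarrow>
           ((\<lambda>g. LINT x|M. h x * \<delta> g x) \<longlongrightarrow> (LINT x|M. h x * \<delta> f x)) F))"

text \<open>\<phi> is (a version of) \<bar>\<delta> f for a Lipschitz, possibly unbounded f:
on every ball B, \<phi> = \<delta> g a.e. on B for any bounded Lipschitz g agreeing with f on B.\<close>
definition is_bar_delta :: "(real^'n) measure \<Rightarrow> ((real^'n \<Rightarrow> real) \<Rightarrow> (real^'n \<Rightarrow> real))
    \<Rightarrow> (real^'n \<Rightarrow> real) \<Rightarrow> (real^'n \<Rightarrow> real) \<Rightarrow> bool" where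
  "is_bar_delta M \<delta> f \<phi> \<longleftrightarrow>
     (\<forall>c r. \<forall>g\<in>Lipb. (\<forall>x\<in>ball c r. g x = f x) \<longrightarrow>
        (AE x in M. x \<in> ball c r \<longrightarrow> \<phi> x = \<delta> g x))"

end

theory Submission
  imports Defs
begin

lemma Lipb_iff: "f \<in> Lipb \<longleftrightarrow> (\<exists>B. \<forall>x. \<bar>f x\<bar> \<le> B) \<and> (\<exists>C. C-lipschitz_on UNIV f)"
  unfolding Lipb_def by (auto simp: bounded_real)

lemma LipbI: "(\<And>x. \<bar>f x\<bar> \<le> B) \<Longrightarrow> C-lipschitz_on UNIV f \<Longrightarrow> f \<in> Lipb"
  unfolding Lipb_iff by blast

lemma LipbE: assumes "f \<in> Lipb"
  obtains B C where "\<And>x. \<bar>f x\<bar> \<le> B" "C-lipschitz_on UNIV f" "0 \<le> B" "0 \<le> C"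
proof -
  from assms obtain B C where "\<And>x. \<bar>f x\<bar> \<le> B" "C-lipschitz_on UNIV f" unfolding Lipb_iff by blast
  moreover have "0 \<le> B" using calculation(1)[of undefined] by simp
  moreover have "0 \<le> C" using calculation(2) lipschitz_on_nonneg by blast
  ultimately show ?thesis using that by blast
qed

lemma lip_norm_le:
  assumes "C-lipschitz_on UNIV f" "\<And>x. \<bar>f x\<bar> \<le> B"
  shows "lip_norm f \<le> max B C"
proof -
  have "lip_const f \<le> C" unfolding lip_const_def
    by (rule cInf_lower) (auto simp: assms(1) bdd_below_def intro!: exI[of _ 0] lipschitz_on_nonneg)
  moreover have "(SUP x. \<bar>f x\<bar>) \<le> B" by (rule cSUP_least) (use assms in auto)
  ultimately show ?thesis unfolding lip_norm_def by auto
qed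

lemma Lipb_lin: assumes "f \<in> Lipb" "g \<in> Lipb" shows "(\<lambda>y. a * f y + b * g y) \<in> Lipb"
proof -
  obtain B1 C1 where 1: "\<And>x. \<bar>f x\<bar> \<le> B1" "C1-lipschitz_on UNIV f" using assms(1) by (elim LipbE) blast
  obtain B2 C2 where 2: "\<And>x. \<bar>g x\<bar> \<le> B2" "C2-lipschitz_on UNIV g" using assms(2) by (elim LipbE) blast
  have "\<bar>a * f x + b * g x\<bar> \<le> \<bar>a\<bar> * B1 + \<bar>b\<bar> * B2" for x
  proof -
    have "\<bar>a * f x + b * g x\<bar> \<le> \<bar>a\<bar> * \<bar>f x\<bar> + \<bar>b\<bar> * \<bar>g x\<bar>" by (simp add: abs_mult abs_triangle_ineq[THEN order_trans])
    also have "\<dots> \<le> \<bar>a\<bar> * B1 + \<bar>b\<bar> * B2" using 1 2 by (intro add_mono mult_left_mono) auto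
    finally show ?thesis .
  qed
  moreover have "(\<bar>a\<bar> * C1 + \<bar>b\<bar> * C2)-lipschitz_on UNIV (\<lambda>y. a * f y + b * g y)"
    by (intro lipschitz_on_add lipschitz_on_cmult_real 1 2)
  ultimately show ?thesis by (rule LipbI)
qed

lemma Lipb_mult: assumes "f \<in> Lipb" "g \<in> Lipb" shows "(\<lambda>y. f y * g y) \<in> Lipb"
proof -
  obtain B1 C1 where 1: "\<And>x. \<bar>f x\<bar> \<le> B1" "C1-lipschitz_on UNIV f" "0 \<le> B1" "0 \<le> C1" using assms(1) by (elim LipbE) blast
  obtain B2 C2 where 2: "\<And>x. \<bar>g x\<bar> \<le> B2" "C2-lipschitz_on UNIV g" "0 \<le> B2" "0 \<le> C2" using assms(2) by (elim LipbE) blast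
  have "\<bar>f x * g x\<bar> \<le> B1 * B2" for x using 1 2 by (simp add: abs_mult mult_mono)
  moreover have "(B1 * C2 + B2 * C1)-lipschitz_on UNIV (\<lambda>y. f y * g y)"
  proof (rule lipschitz_onI)
    fix x y :: "real^'a"
    have a: "\<bar>f x - f y\<bar> \<le> C1 * dist x y" using lipschitz_onD[OF 1(2)] by (simp add: dist_real_def)
    have b: "\<bar>g x - g y\<bar> \<le> C2 * dist x y" using lipschitz_onD[OF 2(2)] by (simp add: dist_real_def)
    have "\<bar>f x * g x - f y * g y\<bar> = \<bar>f x * (g x - g y) + g y * (f x - f y)\<bar>" by (simp add: algebra_simps)
    also have "\<dots> \<le> \<bar>f x\<bar> * \<bar>g x - g y\<bar> + \<bar>g y\<bar> * \<bar>f x - f y\<bar>" by (simp add: abs_mult abs_triangle_ineq[THEN order_trans])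
    also have "\<dots> \<le> B1 * (C2 * dist x y) + B2 * (C1 * dist x y)"
      using 1 2 a b by (intro add_mono mult_mono) auto
    finally show "dist (f x * g x) (f y * g y) \<le> (B1 * C2 + B2 * C1) * dist x y"
      by (simp add: dist_real_def algebra_simps)
  qed (use 1 2 in auto)
  ultimately show ?thesis by (rule LipbI)
qed

lemma Lipb_const: "(\<lambda>y. c) \<in> Lipb"
  by (rule LipbI[where B="\<bar>c\<bar>" and C=0]) (auto intro: lipschitz_on_constant)

lemma Lipb_abs: assumes "f \<in> Lipb" shows "(\<lambda>y. \<bar>f y\<bar>) \<in> Lipb"
proof -
  obtain B1 C1 where 1: "\<And>x. \<bar>f x\<bar> \<le> B1" "C1-lipschitz_on UNIV f" using assms(1) by (elim LipbE) blast
  have "C1-lipschitz_on UNIV (\<lambda>y. \<bar>f y\<bar>)"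
    using lipschitz_on_nonneg[OF 1(2)] lipschitz_onD[OF 1(2)]
    by (intro lipschitz_onI) (auto simp: dist_real_def intro: order_trans[OF abs_triangle_ineq3])
  then show ?thesis using 1 by (intro LipbI[where B=B1]) auto
qed

lemma der_meas: "derivation M \<delta> \<Longrightarrow> f \<in> Lipb \<Longrightarrow> \<delta> f \<in> borel_measurable M"
  unfolding derivation_def by blast
lemma der_lin: "derivation M \<delta> \<Longrightarrow> f \<in> Lipb \<Longrightarrow> g \<in> Lipb \<Longrightarrow>
   AE x in M. \<delta> (\<lambda>y. a * f y + b * g y) x = a * \<delta> f x + b * \<delta> g x"
  unfolding derivation_def by blast
lemma der_mult: "derivation M \<delta> \<Longrightarrow> f \<in> Lipb \<Longrightarrow> g \<in> Lipb \<Longrightarrow>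
   AE x in M. \<delta> (\<lambda>y. f y * g y) x = f x * \<delta> g x + g x * \<delta> f x"
  unfolding derivation_def by blast
lemma der_cont: "derivation M \<delta> \<Longrightarrow> (\<forall>\<^sub>F g in F. g \<in> Lipb \<and> lip_norm g \<le> C) \<Longrightarrow>
        (\<forall>x. ((\<lambda>g. g x) \<longlongrightarrow> f x) F) \<Longrightarrow> integrable M h \<Longrightarrow>
           ((\<lambda>g. LINT x|M. h x * \<delta> g x) \<longlongrightarrow> (LINT x|M. h x * \<delta> f x)) F"
  unfolding derivation_def by blast

definition ZA :: "(real^'n) measure \<Rightarrow> ((real^'n \<Rightarrow> real) \<Rightarrow> (real^'n \<Rightarrow> real)) \<Rightarrow> (real^'n) set \<Rightarrow> (real^'n \<Rightarrow> real) \<Rightarrow> bool"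
  where "ZA M \<delta> A f \<longleftrightarrow> f \<in> Lipb \<and> (AE x in M. x \<in> A \<longrightarrow> \<delta> f x = 0)"

lemma Z_lin: assumes "derivation M \<delta>" "ZA M \<delta> A f" "ZA M \<delta> A g"
  shows "ZA M \<delta> A (\<lambda>y. a * f y + b * g y)"
proof -
  have "AE x in M. \<delta> (\<lambda>y. a * f y + b * g y) x = a * \<delta> f x + b * \<delta> g x"
    using assms by (intro der_lin) (auto simp: ZA_def)
  moreover have "AE x in M. x \<in> A \<longrightarrow> \<delta> f x = 0" "AE x in M. x \<in> A \<longrightarrow> \<delta> g x = 0"
    using assms by (auto simp: ZA_def)
  ultimately have "AE x in M. x \<in> A \<longrightarrow> \<delta> (\<lambda>y. a * f y + b * g y) x = 0"
    by eventually_elim simp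
  then show ?thesis using assms by (auto simp: ZA_def intro!: Lipb_lin)
qed

lemma Z_mult: assumes "derivation M \<delta>" "ZA M \<delta> A f" "ZA M \<delta> A g"
  shows "ZA M \<delta> A (\<lambda>y. f y * g y)"
proof -
  have "AE x in M. \<delta> (\<lambda>y. f y * g y) x = f x * \<delta> g x + g x * \<delta> f x"
    using assms by (intro der_mult) (auto simp: ZA_def)
  moreover have "AE x in M. x \<in> A \<longrightarrow> \<delta> f x = 0" "AE x in M. x \<in> A \<longrightarrow> \<delta> g x = 0"
    using assms by (auto simp: ZA_def)
  ultimately have "AE x in M. x \<in> A \<longrightarrow> \<delta> (\<lambda>y. f y * g y) x = 0"
    by eventually_elim simp
  then show ?thesis using assms by (auto simp: ZA_def intro!: Lipb_mult)
qed

lemma Z_const: assumes "derivation M \<delta>" shows "ZA M \<delta> A (\<lambda>y. c)"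
proof -
  have "AE x in M. \<delta> (\<lambda>y. (\<lambda>y. 1::real) y * (\<lambda>y. 1) y) x = 1 * \<delta> (\<lambda>y. 1) x + 1 * \<delta> (\<lambda>y. 1) x"
    using assms Lipb_const by (intro der_mult) auto
  then have 1: "AE x in M. \<delta> (\<lambda>y. 1) x = 0" by eventually_elim simp
  have "AE x in M. \<delta> (\<lambda>y. c * (\<lambda>y. 1::real) y + 0 * (\<lambda>y. 1) y) x = c * \<delta> (\<lambda>y. 1) x + 0 * \<delta> (\<lambda>y. 1) x"
    using assms Lipb_const by (intro der_lin) auto
  with 1 have "AE x in M. \<delta> (\<lambda>y. c) x = 0" by eventually_elim simp
  then show ?thesis by (auto simp: ZA_def Lipb_const)
qed

lemma Z_limit:
  assumes der: "derivation M \<delta>" and rad: "radon_measure M" and A: "A \<in> sets borel"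
    and F: "F \<noteq> bot" and ev: "eventually (\<lambda>g. ZA M \<delta> A g \<and> lip_norm g \<le> C) F"
    and conv: "\<forall>x. ((\<lambda>g. g x) \<longlongrightarrow> f x) F" and f: "f \<in> Lipb"
  shows "ZA M \<delta> A f"
proof -
  have sM: "sets M = sets borel" using rad by (simp add: radon_measure_def)
  have mf: "\<delta> f \<in> borel_measurable M" using der f by (rule der_meas)
  have int0: "(LINT x|M. h x * \<delta> f x) = 0" if h: "integrable M h" "\<And>x. x \<notin> A \<Longrightarrow> h x = 0" for h
  proof -
    have ev': "\<forall>\<^sub>F g in F. g \<in> Lipb \<and> lip_norm g \<le> C" using ev by eventually_elim (auto simp: ZA_def)
    have lim: "((\<lambda>g. LINT x|M. h x * \<delta> g x) \<longlongrightarrow> (LINT x|M. h x * \<delta> f x)) F"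
      using der_cont[OF der ev' conv h(1)] .
    have "\<forall>\<^sub>F g in F. (LINT x|M. h x * \<delta> g x) = 0"
      using ev
    proof eventually_elim
      case (elim g)
      then have gA: "AE x in M. x \<in> A \<longrightarrow> \<delta> g x = 0" and gL: "g \<in> Lipb" by (auto simp: ZA_def)
      from gA have "AE x in M. h x * \<delta> g x = 0" by eventually_elim (use h(2) in auto)
      moreover have "(\<lambda>x. h x * \<delta> g x) \<in> borel_measurable M"
        using der_meas[OF der gL] h(1) by measurable
      ultimately have "(LINT x|M. h x * \<delta> g x) = (LINT x|M. 0)"
        by (intro integral_cong_AE) auto
      then show ?case by simp
    qed
    then have "((\<lambda>g. 0) \<longlongrightarrow> (LINT x|M. h x * \<delta> f x)) F"
      using lim by (rule Lim_transform_eventually[rotated])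
    then show ?thesis using F by (simp add: tendsto_const_iff)
  qed
  have "AE x in M. x \<in> A \<inter> cball 0 (real k) \<longrightarrow> \<delta> f x = 0" for k :: nat
  proof -
    define S where "S = A \<inter> cball (0::real^'a) (real k)"
    have S: "S \<in> sets M" unfolding S_def sM using A by auto
    have "emeasure M S \<le> emeasure M (cball 0 (real k))"
      by (rule emeasure_mono) (auto simp: S_def sM)
    also have "\<dots> < \<infinity>" using rad by (simp add: radon_measure_def)
    finally have fin: "emeasure M S < \<infinity>" .
    have mh: "(\<lambda>x. indicator S x * sgn (\<delta> f x)) \<in> borel_measurable M"
      using S mf by measurable
    have ih: "integrable M (\<lambda>x. indicator S x * sgn (\<delta> f x))"
      by (rule Bochner_Integration.integrable_bound[OF integrable_real_indicator[OF S fin] mh])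
         (auto simp: indicator_def abs_sgn_eq)
    have "(LINT x|M. indicator S x * sgn (\<delta> f x) * \<delta> f x) = 0"
      by (rule int0[OF ih]) (auto simp: S_def)
    moreover have "(\<lambda>x. indicator S x * sgn (\<delta> f x) * \<delta> f x) = (\<lambda>x. indicator S x * \<bar>\<delta> f x\<bar>)"
      by (rule ext) (simp add: sgn_real_def)
    ultimately have i0: "(LINT x|M. indicator S x * \<bar>\<delta> f x\<bar>) = 0" by simp
    obtain B where B: "AE x in M. \<bar>\<delta> f x\<bar> \<le> B" using der f unfolding derivation_def by blast
    have "integrable M (\<lambda>x. B * indicator S x)" using S fin by simp
    moreover have "(\<lambda>x. indicator S x * \<bar>\<delta> f x\<bar>) \<in> borel_measurable M" using S mf by measurable
    moreover have "AE x in M. norm (indicator S x * \<bar>\<delta> f x\<bar>) \<le> norm (B * indicator S x)"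
      using B by eventually_elim (auto simp: indicator_def)
    ultimately have "integrable M (\<lambda>x. indicator S x * \<bar>\<delta> f x\<bar>)"
      by (rule Bochner_Integration.integrable_bound)
    then have "AE x in M. indicator S x * \<bar>\<delta> f x\<bar> = 0"
      using i0 by (subst (asm) integral_nonneg_eq_0_iff_AE) auto
    then show ?thesis by eventually_elim (auto simp: S_def indicator_def)
  qed
  then have "AE x in M. \<forall>k::nat. x \<in> A \<inter> cball 0 (real k) \<longrightarrow> \<delta> f x = 0"
    by (subst AE_all_countable) blast
  then have "AE x in M. x \<in> A \<longrightarrow> \<delta> f x = 0"
  proof eventually_elim
    case (elim x)
    obtain k :: nat where "norm x \<le> real k" using real_arch_simple by blast
    then show ?case using elim[rule_format, of k] by auto
  qed
  then show ?thesis using f by (simp add: ZA_def)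
qed


lemma Z_cong: "ZA M \<delta> A f \<Longrightarrow> f = g \<Longrightarrow> ZA M \<delta> A g" by simp

lemma Z_sqrt: assumes der: "derivation M \<delta>" and s: "s \<in> Lipb" "\<And>y. s y > 0"
  and ss: "ZA M \<delta> A (\<lambda>y. s y * s y)" shows "ZA M \<delta> A s"
proof -
  have "AE x in M. \<delta> (\<lambda>y. s y * s y) x = s x * \<delta> s x + s x * \<delta> s x"
    using der s by (intro der_mult) auto
  moreover have "AE x in M. x \<in> A \<longrightarrow> \<delta> (\<lambda>y. s y * s y) x = 0" using ss by (simp add: ZA_def)
  ultimately have "AE x in M. x \<in> A \<longrightarrow> \<delta> s x = 0"
  proof eventually_elim
    case (elim x)
    then show ?case using s(2)[of x] by auto
  qed
  then show ?thesis using s by (simp add: ZA_def)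
qed

lemma sq_lip: "\<bar>sqrt (a\<^sup>2 + e) - sqrt (b\<^sup>2 + e)\<bar> \<le> \<bar>a - b\<bar>" if "e \<ge> 0" for a b e :: real
proof -
  have n: "sqrt (t\<^sup>2 + e) = norm (t, sqrt e)" for t using that by (simp add: norm_Pair)
  have "\<bar>norm (a, sqrt e) - norm (b, sqrt e)\<bar> \<le> norm ((a, sqrt e) - (b, sqrt e))"
    by (rule norm_triangle_ineq3)
  also have "\<dots> = \<bar>a - b\<bar>" by (simp add: norm_Pair)
  finally show ?thesis by (simp add: n)
qed

lemma Z_abs:
  assumes der: "derivation M \<delta>" and rad: "radon_measure M" and A: "A \<in> sets borel"
    and h: "ZA M \<delta> A h"
  shows "ZA M \<delta> A (\<lambda>y. \<bar>h y\<bar>)"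
proof -
  have hL: "h \<in> Lipb" using h by (simp add: ZA_def)
  obtain B L where B: "\<And>x. \<bar>h x\<bar> \<le> B" and L: "L-lipschitz_on UNIV h" and B0: "0 \<le> B" and L0: "0 \<le> L"
    using hL by (elim LipbE) blast
  define e :: "nat \<Rightarrow> real" where "e k = 1 / Suc k" for k
  have e0: "e k > 0" for k by (simp add: e_def)
  have e1: "e k \<le> 1" for k by (simp add: e_def)
  define s where "s k = (\<lambda>y. sqrt ((h y)\<^sup>2 + e k))" for k
  have slip: "L-lipschitz_on UNIV (s k)" for k
  proof (rule lipschitz_onI)
    fix x y
    have "dist (s k x) (s k y) \<le> \<bar>h x - h y\<bar>"
      unfolding s_def dist_real_def using e0[of k] by (intro sq_lip) simp
    also have "\<dots> \<le> L * dist x y" using lipschitz_onD[OF L] by (simp add: dist_real_def)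
    finally show "dist (s k x) (s k y) \<le> L * dist x y" .
  qed (rule L0)
  have sbd: "\<bar>s k x\<bar> \<le> B + 1" for k x
  proof -
    have "sqrt ((h x)\<^sup>2 + e k) \<le> sqrt ((h x)\<^sup>2) + sqrt (e k)"
      using e0[of k] by (intro sqrt_add_le_add_sqrt) auto
    also have "\<dots> \<le> B + 1" using B[of x] e1[of k] by (intro add_mono) auto
    finally show ?thesis using e0[of k] by (simp add: s_def)
  qed
  have sL: "s k \<in> Lipb" for k using sbd slip by (rule LipbI)
  have sZ: "ZA M \<delta> A (s k)" for k
  proof (rule Z_sqrt[OF der sL])
    show "s k y > 0" for y using e0[of k] by (simp add: s_def add_nonneg_pos)
    have "ZA M \<delta> A (\<lambda>y. 1 * (h y * h y) + e k * (\<lambda>y. 1) y)"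
      by (intro Z_lin Z_mult Z_const der h)
    then show "ZA M \<delta> A (\<lambda>y. s k y * s k y)"
      by (rule Z_cong) (use e0[of k] in \<open>auto simp: s_def power2_eq_square\<close>)
  qed
  show ?thesis
  proof (rule Z_limit[OF der rad A, where F="filtermap s sequentially" and C="max (B + 1) L"])
    show "filtermap s sequentially \<noteq> bot" by (simp add: filtermap_bot_iff)
    show "\<forall>\<^sub>F g in filtermap s sequentially. ZA M \<delta> A g \<and> lip_norm g \<le> max (B + 1) L"
      unfolding eventually_filtermap using sZ lip_norm_le[OF slip sbd] by auto
    show "\<forall>x. ((\<lambda>g. g x) \<longlongrightarrow> \<bar>h x\<bar>) (filtermap s sequentially)"
    proof
      fix x
      have "e \<longlonglongrightarrow> 0" unfolding e_def using LIMSEQ_Suc[OF lim_inverse_n'] by simp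
      then have "(\<lambda>k. sqrt ((h x)\<^sup>2 + e k)) \<longlonglongrightarrow> sqrt ((h x)\<^sup>2 + 0)"
        by (intro tendsto_intros)
      then show "((\<lambda>g. g x) \<longlongrightarrow> \<bar>h x\<bar>) (filtermap s sequentially)"
        by (simp add: filterlim_filtermap s_def)
    qed
    show "(\<lambda>y. \<bar>h y\<bar>) \<in> Lipb" using hL by (rule Lipb_abs)
  qed
qed

lemma Z_min:
  assumes der: "derivation M \<delta>" and rad: "radon_measure M" and A: "A \<in> sets borel"
    and f: "ZA M \<delta> A f" and g: "ZA M \<delta> A g"
  shows "ZA M \<delta> A (\<lambda>y. min (f y) (g y))"
proof -
  have d: "ZA M \<delta> A (\<lambda>y. 1 * f y + (-1) * g y)" by (intro Z_lin der f g)
  have "ZA M \<delta> A (\<lambda>y. (1/2) * (\<lambda>y. 1 * f y + 1 * g y) y + (-1/2) * (\<lambda>y. \<bar>1 * f y + (-1) * g y\<bar>) y)"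
    by (intro Z_lin Z_abs der rad A f g d)
  then show ?thesis by (rule Z_cong) (rule ext, auto simp: min_def abs_if field_simps)
qed


lemma Z_coord:
  fixes M :: "(real^'n) measure"
  assumes der: "derivation M \<delta>" and rad: "radon_measure M"
    and bar: "\<And>j. is_bar_delta M \<delta> (\<lambda>x. x $ j) (\<lambda>x. 0)" and K: "0 \<le> K"
  shows "ZA M \<delta> UNIV (\<lambda>x. min K \<bar>x $ j - c\<bar>)"
proof -
  have wL: "(\<lambda>x::real^'n. min K \<bar>x $ j - c\<bar>) \<in> Lipb"
  proof (rule LipbI[where B=K and C=1])
    show "\<bar>min K \<bar>x $ j - c\<bar>\<bar> \<le> K" for x::"real^'n" using K by auto
    show "1-lipschitz_on UNIV (\<lambda>x::real^'n. min K \<bar>x $ j - c\<bar>)"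
    proof (rule lipschitz_onI)
      fix x y :: "real^'n"
      have "\<bar>min K \<bar>x $ j - c\<bar> - min K \<bar>y $ j - c\<bar>\<bar> \<le> \<bar>(x - y) $ j\<bar>" by (simp add: min_def abs_if)
      also have "\<dots> \<le> norm (x - y)" by (rule component_le_norm_cart)
      finally show "dist (min K \<bar>x $ j - c\<bar>) (min K \<bar>y $ j - c\<bar>) \<le> 1 * dist x y"
        by (simp add: dist_real_def dist_norm)
    qed simp
  qed
  have "AE x in M. x \<in> ball 0 (real m) \<longrightarrow> \<delta> (\<lambda>x. min K \<bar>x $ j - c\<bar>) x = 0" for m :: nat
  proof -
    define R where "R = real m + \<bar>c\<bar> + K"
    define cl where "cl = (\<lambda>x::real^'n. max (-R) (min R (x $ j)))"
    have clL: "cl \<in> Lipb"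
    proof (rule LipbI[where B=R and C=1])
      show "\<bar>cl x\<bar> \<le> R" for x using K by (auto simp: cl_def R_def)
      show "1-lipschitz_on UNIV cl"
      proof (rule lipschitz_onI)
        fix x y :: "real^'n"
        have "\<bar>cl x - cl y\<bar> \<le> \<bar>(x - y) $ j\<bar>" by (simp add: cl_def min_def max_def abs_if)
        also have "\<dots> \<le> norm (x - y)" by (rule component_le_norm_cart)
        finally show "dist (cl x) (cl y) \<le> 1 * dist x y" by (simp add: dist_real_def dist_norm)
      qed simp
    qed
    have eqb: "\<forall>x\<in>ball 0 (real m). cl x = x $ j"
    proof
      fix x :: "real^'n" assume "x \<in> ball 0 (real m)"
      then have "norm x < real m" by simp
      then have "\<bar>x $ j\<bar> \<le> R" using component_le_norm_cart[of x j] K by (simp add: R_def)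
      then show "cl x = x $ j" by (auto simp: cl_def)
    qed
    have "AE x in M. x \<in> ball 0 (real m) \<longrightarrow> 0 = \<delta> cl x"
      using bar[of j] clL eqb unfolding is_bar_delta_def by blast
    then have clZ: "ZA M \<delta> (ball 0 (real m)) cl" using clL by (auto simp: ZA_def elim: AE_mp)
    have A: "ball 0 (real m) \<in> sets borel" by simp
    have "ZA M \<delta> (ball 0 (real m)) (\<lambda>y. min ((\<lambda>y. K) y) ((\<lambda>y. \<bar>1 * cl y + (-c) * (\<lambda>y. 1) y\<bar>) y))"
      by (intro Z_min Z_abs Z_lin Z_const der rad A clZ)
    moreover have "(\<lambda>y. min ((\<lambda>y. K) y) ((\<lambda>y. \<bar>1 * cl y + (-c) * (\<lambda>y. 1) y\<bar>) y)) = (\<lambda>x. min K \<bar>x $ j - c\<bar>)"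
    proof (rule ext)
      fix x :: "real^'n"
      show "min ((\<lambda>y. K) x) ((\<lambda>y. \<bar>1 * cl y + (-c) * (\<lambda>y. 1) y\<bar>) x) = min K \<bar>x $ j - c\<bar>"
        using K by (simp add: cl_def R_def min_def max_def abs_if) linarith?
    qed
    ultimately show ?thesis by (simp add: ZA_def)
  qed
  then have "AE x in M. \<forall>m::nat. x \<in> ball 0 (real m) \<longrightarrow> \<delta> (\<lambda>x. min K \<bar>x $ j - c\<bar>) x = 0"
    by (subst AE_all_countable) blast
  then have "AE x in M. \<delta> (\<lambda>x. min K \<bar>x $ j - c\<bar>) x = 0"
  proof eventually_elim
    case (elim x)
    obtain m :: nat where "norm x < real m" using reals_Archimedean2 by blast
    then show ?case using elim by auto
  qed
  then show ?thesis using wL by (simp add: ZA_def)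
qed


lemma Z_sum: assumes der: "derivation M \<delta>" and fin: "finite J" and g: "\<And>j. j \<in> J \<Longrightarrow> ZA M \<delta> A (g j)"
  shows "ZA M \<delta> A (\<lambda>x. \<Sum>j\<in>J. g j x)"
  using fin g
proof (induction J rule: finite_induct)
  case empty then show ?case using Z_const[OF der, of A 0] by simp
next
  case (insert a J)
  have "ZA M \<delta> A (\<lambda>x. 1 * g a x + 1 * (\<lambda>x. \<Sum>j\<in>J. g j x) x)"
    using insert by (intro Z_lin der) auto
  then show ?case using insert by simp
qed

lemma Z_Min:
  assumes der: "derivation M \<delta>" and rad: "radon_measure M" and A: "A \<in> sets borel"
    and fin: "finite S" "S \<noteq> {}" and T: "\<And>y. y \<in> S \<Longrightarrow> ZA M \<delta> A (T y)"
  shows "ZA M \<delta> A (\<lambda>x. Min ((\<lambda>y. T y x) ` S))"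
  using fin T
proof (induction S rule: finite_ne_induct)
  case (singleton y) then show ?case by simp
next
  case (insert a S)
  have "ZA M \<delta> A (\<lambda>x. min (T a x) ((\<lambda>x. Min ((\<lambda>y. T y x) ` S)) x))"
    using insert by (intro Z_min der rad A) auto
  then show ?case using insert by simp
qed

lemma Min_lip:
  fixes T :: "'a \<Rightarrow> 'b::metric_space \<Rightarrow> real"
  assumes fin: "finite S" "S \<noteq> {}" and T: "\<And>y. y \<in> S \<Longrightarrow> C-lipschitz_on UNIV (T y)" and C: "0 \<le> C"
  shows "C-lipschitz_on UNIV (\<lambda>x. Min ((\<lambda>y. T y x) ` S))"
proof (rule lipschitz_onI[OF _ C])
  have one: "Min ((\<lambda>y. T y x) ` S) \<le> Min ((\<lambda>y. T y x') ` S) + C * dist x x'" for x x'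
  proof -
    have "Min ((\<lambda>y. T y x') ` S) \<in> (\<lambda>y. T y x') ` S" using fin by (intro Min_in) auto
    then obtain y where y: "y \<in> S" "Min ((\<lambda>y. T y x') ` S) = T y x'" by auto
    have "Min ((\<lambda>y. T y x) ` S) \<le> T y x" using fin y by (intro Min_le) auto
    also have "\<dots> \<le> T y x' + C * dist x x'"
      using lipschitz_onD[OF T[OF y(1)], of x x'] by (simp add: dist_real_def)
    finally show ?thesis using y by simp
  qed
  fix x x'
  show "dist (Min ((\<lambda>y. T y x) ` S)) (Min ((\<lambda>y. T y x') ` S)) \<le> C * dist x x'"
    using one[of x x'] one[of x' x] by (simp add: dist_real_def dist_commute abs_le_iff)
qed

theorem corollary2p21:
  fixes M :: "(real^'n) measure"
    and \<delta> :: "(real^'n \<Rightarrow> real) \<Rightarrow> (real^'n \<Rightarrow> real)"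
  assumes "radon_measure M"
    and "derivation M \<delta>"
    and "\<And>j. is_bar_delta M \<delta> (\<lambda>x. x $ j) (\<lambda>x. 0)"
  shows "\<forall>f\<in>Lipb. AE x in M. \<delta> f x = 0"
proof
  note rad = assms(1) and der = assms(2) and bar = assms(3)
  fix f :: "real^'n \<Rightarrow> real" assume fL: "f \<in> Lipb"
  obtain B L where B: "\<And>x. \<bar>f x\<bar> \<le> B" and L: "L-lipschitz_on UNIV f" and B0: "0 \<le> B" and L0: "0 \<le> L"
    using fL by (elim LipbE) blast
  define L' where "L' = L + 1"
  have L'0: "L' > 0" using L0 by (simp add: L'_def)
  define K where "K = 2 * B / L'"
  have K0: "0 \<le> K" using B0 L'0 by (simp add: K_def)
  have L'K: "L' * K = 2 * B" using L'0 by (simp add: K_def)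
  define n where "n = real CARD('n)"
  have n0: "0 \<le> n" by (simp add: n_def)
  define D where "D y x = (\<Sum>j\<in>UNIV. min K \<bar>x $ j - y $ j\<bar>)" for y x :: "real^'n"
  define T where "T y x = f y + L' * D y x" for y x
  define v where "v S x = Min ((\<lambda>y. T y x) ` S)" for S x
  have D0: "0 \<le> D y x" for y x unfolding D_def using K0 by (intro sum_nonneg) auto
  have Dle: "D y x \<le> n * K" for y x
  proof -
    have "D y x \<le> (\<Sum>j\<in>(UNIV::'n set). K)" unfolding D_def by (intro sum_mono) auto
    then show ?thesis by (simp add: n_def)
  qed
  have DZ: "ZA M \<delta> UNIV (D y)" for y
    unfolding D_def by (intro Z_sum Z_coord der rad bar K0) auto
  have TZ: "ZA M \<delta> UNIV (T y)" for y
  proof -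
    have "ZA M \<delta> UNIV (\<lambda>x. f y * (\<lambda>x. 1) x + L' * D y x)" by (intro Z_lin Z_const DZ der)
    then show ?thesis by (simp add: T_def[abs_def])
  qed
  have Dlip: "n-lipschitz_on UNIV (D y)" for y
  proof (rule lipschitz_onI[OF _ n0])
    fix x x' :: "real^'n"
    have "\<bar>D y x - D y x'\<bar> = \<bar>\<Sum>j\<in>UNIV. (min K \<bar>x $ j - y $ j\<bar> - min K \<bar>x' $ j - y $ j\<bar>)\<bar>"
      by (simp add: D_def sum_subtractf)
    also have "\<dots> \<le> (\<Sum>j\<in>UNIV. \<bar>min K \<bar>x $ j - y $ j\<bar> - min K \<bar>x' $ j - y $ j\<bar>\<bar>)"
      by (rule sum_abs)
    also have "\<dots> \<le> (\<Sum>j\<in>(UNIV::'n set). dist x x')"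
    proof (rule sum_mono)
      fix j
      have "\<bar>min K \<bar>x $ j - y $ j\<bar> - min K \<bar>x' $ j - y $ j\<bar>\<bar> \<le> \<bar>(x - x') $ j\<bar>" by (simp add: min_def abs_if)
      also have "\<dots> \<le> norm (x - x')" by (rule component_le_norm_cart)
      finally show "\<bar>min K \<bar>x $ j - y $ j\<bar> - min K \<bar>x' $ j - y $ j\<bar>\<bar> \<le> dist x x'" by (simp add: dist_norm)
    qed
    finally show "dist (D y x) (D y x') \<le> n * dist x x'" by (simp add: n_def dist_real_def)
  qed
  have Tlip: "(L' * n)-lipschitz_on UNIV (T y)" for y
  proof -
    have "(0 + L' * n)-lipschitz_on UNIV (\<lambda>x. f y + L' * D y x)"
      using L'0 by (intro lipschitz_on_add lipschitz_on_constant lipschitz_on_cmult_real_nonneg Dlip) auto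
    then show ?thesis by (simp add: T_def[abs_def])
  qed
  have Tlow: "- B \<le> T y x" for y x
  proof -
    have "0 \<le> L' * D y x" using D0[of y x] L'0 by simp
    then show ?thesis using B[of y] by (simp add: T_def abs_le_iff)
  qed
  have Tup: "T y x \<le> B + L' * (n * K)" for y x
  proof -
    have "L' * D y x \<le> L' * (n * K)" using Dle[of y x] L'0 by (intro mult_left_mono) auto
    then show ?thesis using B[of y] by (simp add: T_def abs_le_iff)
  qed
  have vgood: "ZA M \<delta> UNIV (v S) \<and> lip_norm (v S) \<le> max (B + L' * (n * K)) (L' * n)"
    if S: "finite S" "S \<noteq> {}" for S
  proof
    show "ZA M \<delta> UNIV (v S)" unfolding v_def[abs_def] by (intro Z_Min der rad S TZ) auto
    have lip: "(L' * n)-lipschitz_on UNIV (v S)" unfolding v_def[abs_def]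
      using L'0 n0 by (intro Min_lip S Tlip) auto
    have bd: "\<bar>v S x\<bar> \<le> B + L' * (n * K)" for x
    proof -
      have "v S x \<in> (\<lambda>y. T y x) ` S" unfolding v_def using S by (intro Min_in) auto
      then obtain y where y: "y \<in> S" "v S x = T y x" by auto
      have "0 \<le> L' * (n * K)" using L'0 n0 K0 by simp
      then show ?thesis using y Tlow[of y x] Tup[of y x] B0 by (simp add: abs_le_iff)
    qed
    show "lip_norm (v S) \<le> max (B + L' * (n * K)) (L' * n)" by (rule lip_norm_le[OF lip bd])
  qed
  have vx: "v S x = f x" if S: "finite S" "x \<in> S" for S x
  proof -
    have Txx: "T x x = f x" unfolding T_def D_def using K0 by simp
    have ge: "f x \<le> T y x" for y
    proof (cases "\<forall>j. \<bar>x $ j - y $ j\<bar> < K")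
      case True
      then have "D y x = (\<Sum>j\<in>UNIV. \<bar>(x - y) $ j\<bar>)" unfolding D_def by (intro sum.cong) auto
      then have "norm (x - y) \<le> D y x" using norm_le_l1_cart[of "x - y"] by simp
      moreover have "f x \<le> f y + L * norm (x - y)"
        using lipschitz_onD[OF L, of x y] by (simp add: dist_real_def dist_norm)
      moreover have "L * norm (x - y) \<le> L' * D y x"
      proof -
        have "L * norm (x - y) \<le> L * D y x" using calculation(1) L0 by (intro mult_left_mono)
        also have "\<dots> \<le> L' * D y x" using D0[of y x] by (intro mult_right_mono) (auto simp: L'_def)
        finally show ?thesis .
      qed
      ultimately show ?thesis by (simp add: T_def)
    next
      case False
      then obtain j where j: "K \<le> \<bar>x $ j - y $ j\<bar>" by (auto simp: not_less)
      have "K \<le> D y x"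
      proof -
        have "min K \<bar>x $ j - y $ j\<bar> \<le> D y x" unfolding D_def using K0
          by (intro member_le_sum) auto
        then show ?thesis using j by simp
      qed
      then have "2 * B \<le> L' * D y x" using L'K L'0 by (metis mult_left_mono less_imp_le)
      then show ?thesis using B[of x] B[of y] by (simp add: T_def)
    qed
    show ?thesis unfolding v_def
      by (rule Min_eqI) (use S Txx ge in \<open>auto intro!: image_eqI[where x=x]\<close>)
  qed
  have evx: "eventually (\<lambda>S. finite S \<and> x \<in> S) (finite_subsets_at_top UNIV)" for x
    unfolding eventually_finite_subsets_at_top by (intro exI[of _ "{x}"]) auto
  have "ZA M \<delta> UNIV f"
  proof (rule Z_limit[OF der rad _ _ _ _ fL, where F="filtermap v (finite_subsets_at_top UNIV)"
        and C="max (B + L' * (n * K)) (L' * n)"])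
    show "UNIV \<in> sets borel" by simp
    show "filtermap v (finite_subsets_at_top UNIV) \<noteq> bot" by (simp add: filtermap_bot_iff)
    show "\<forall>\<^sub>F g in filtermap v (finite_subsets_at_top UNIV). ZA M \<delta> UNIV g \<and> lip_norm g \<le> max (B + L' * (n * K)) (L' * n)"
      unfolding eventually_filtermap using evx[of 0] by eventually_elim (intro vgood, auto)
    show "\<forall>x. ((\<lambda>g. g x) \<longlongrightarrow> f x) (filtermap v (finite_subsets_at_top UNIV))"
    proof
      fix x
      have "eventually (\<lambda>g. g x = f x) (filtermap v (finite_subsets_at_top UNIV))"
        unfolding eventually_filtermap using evx[of x] by eventually_elim (simp add: vx)
      then show "((\<lambda>g. g x) \<longlongrightarrow> f x) (filtermap v (finite_subsets_at_top UNIV))"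
        by (rule tendsto_eventually)
    qed
  qed
  then show "AE x in M. \<delta> f x = 0" by (simp add: ZA_def)
qed

end
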